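(* Let $R$ be a nontrivial locally finite commutative ring, $\Sigma$ an alphabet, $L\in\mathrm{RevL}(R,\Sigma)$ a language, and $M_L$ the syntactic monoid of $L$. Then the idempotents of $M_L$ commute, i.e., $M_L\in\mathbf{ECom}$.
   Context: A ring is a semiring $(R,+,\cdot,0,1)$ whose additive monoid is an abelian group; nontrivial means $0\neq1$; it is locally finite if every subsemiring generated by a finite subset is finite. For a semiring $S$ and finite nonempty alphabet $\Sigma$, a series is a map $r\colon\Sigma^*\to S$ with value $(r,w)$ and support $\mathrm{supp}(r)=\{w\mid(r,w)\neq0\}$. A weighted automaton over $S$ and $\Sigma$ is $\mathcal{A}=(Q,\sigma,\iota,\tau)$ with $Q$ finite, $\sigma\colon Q\times\Sigma\times Q\to S$, $\iota,\tau\colon Q\to S$; a run on $w=a_1\cdots a_t$ is $q_0a_1q_1\cdots a_tq_t$ with all $\sigma(q_{k-1},a_k,q_k)\neq0$, of weight $\iota(q_0)\sigma(q_0,a_1,q_1)\cdots\sigma(q_{t-1},a_t,q_t)\tau(q_t)$, and $(\|\mathcal{A}\|,w)$ is the sum of weights of all runs on $w$. $\mathcal{A}$ is reversible if for all $p,p',q,q'\in Q$, $a\in\Sigma$: $\sigma(p,a,q)\neq0\neq\sigma(p,a,q')$ implies $q=q'$, and $\sigma(p,a,q)\neq0\neq\sigma(p',a,q)$ implies $p=p'$. $\mathrm{RevL}(S,\Sigma)$ is the set of supports of series realised by reversible weighted automata over $S$ and $\Sigma$. The syntactic monoid $M_L$ is $\Sigma^*/\!\sim_L$ with $u\sim_L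 v$ iff $xuy\in L\Leftrightarrow xvy\in L$ for all $x,y\in\Sigma^*$. $\mathbf{ECom}$ is the pseudovariety of finite monoids whose idempotents commute. *)

theory Defs
  imports Main "HOL-Algebra.Group"
begin

inductive_set gen_subsemiring :: "'a::semiring_1 set \<Rightarrow> 'a set" for A where
  gen_base: "x \<in> A \<Longrightarrow> x \<in> gen_subsemiring A"
| gen_zero: "0 \<in> gen_subsemiring A"
| gen_one: "1 \<in> gen_subsemiring A"
| gen_add: "x \<in> gen_subsemiring A \<Longrightarrow> y \<in> gen_subsemiring A \<Longrightarrow> x + y \<in> gen_subsemiring A"
| gen_mult: "x \<in> gen_subsemiring A \<Longrightarrow> y \<in> gen_subsemiring A \<Longrightarrow> x * y \<in> gen_subsemiring A"

definition locally_finite :: "'a::semiring_1 itself \<Rightarrow> bool" where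
  "locally_finite _ \<longleftrightarrow> (\<forall>A :: 'a set. finite A \<longrightarrow> finite (gen_subsemiring A))"

definition is_run :: "nat set \<Rightarrow> (nat \<Rightarrow> 'b \<Rightarrow> nat \<Rightarrow> 'a::zero) \<Rightarrow> 'b list \<Rightarrow> nat list \<Rightarrow> bool" where
  "is_run Q \<sigma> w qs \<longleftrightarrow> length qs = Suc (length w) \<and> set qs \<subseteq> Q \<and>
     (\<forall>k < length w. \<sigma> (qs ! k) (w ! k) (qs ! Suc k) \<noteq> 0)"

definition run_weight :: "(nat \<Rightarrow> 'b \<Rightarrow> nat \<Rightarrow> 'a::comm_semiring_1) \<Rightarrow> (nat \<Rightarrow> 'a) \<Rightarrow> (nat \<Rightarrow> 'a)
    \<Rightarrow> 'b list \<Rightarrow> nat list \<Rightarrow> 'a" where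
  "run_weight \<sigma> \<iota> \<tau> w qs =
     \<iota> (qs ! 0) * (\<Prod>k < length w. \<sigma> (qs ! k) (w ! k) (qs ! Suc k)) * \<tau> (qs ! length w)"

definition behaviour :: "nat set \<Rightarrow> (nat \<Rightarrow> 'b \<Rightarrow> nat \<Rightarrow> 'a::comm_semiring_1) \<Rightarrow> (nat \<Rightarrow> 'a)
    \<Rightarrow> (nat \<Rightarrow> 'a) \<Rightarrow> 'b list \<Rightarrow> 'a" where
  "behaviour Q \<sigma> \<iota> \<tau> w = (\<Sum>qs \<in> {qs. is_run Q \<sigma> w qs}. run_weight \<sigma> \<iota> \<tau> w qs)"

definition reversible :: "nat set \<Rightarrow> (nat \<Rightarrow> 'b \<Rightarrow> nat \<Rightarrow> 'a::zero) \<Rightarrow> bool" where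
  "reversible Q \<sigma> \<longleftrightarrow>
     (\<forall>p\<in>Q. \<forall>q\<in>Q. \<forall>q'\<in>Q. \<forall>a. \<sigma> p a q \<noteq> 0 \<and> \<sigma> p a q' \<noteq> 0 \<longrightarrow> q = q') \<and>
     (\<forall>p\<in>Q. \<forall>p'\<in>Q. \<forall>q\<in>Q. \<forall>a. \<sigma> p a q \<noteq> 0 \<and> \<sigma> p' a q \<noteq> 0 \<longrightarrow> p = p')"

definition RevL :: "'a::comm_semiring_1 itself \<Rightarrow> ('b::finite) list set set" where
  "RevL _ = {{w. behaviour Q \<sigma> \<iota> \<tau> w \<noteq> (0::'a)} | Q \<sigma> \<iota> \<tau>. finite Q \<and> reversible Q \<sigma>}"

definition synt_cong :: "'b list set \<Rightarrow> 'b list \<Rightarrow> 'b list \<Rightarrow> bool" where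
  "synt_cong L u v \<longleftrightarrow> (\<forall>x y. x @ u @ y \<in> L \<longleftrightarrow> x @ v @ y \<in> L)"

definition synt_class :: "'b list set \<Rightarrow> 'b list \<Rightarrow> 'b list set" where
  "synt_class L u = {v. synt_cong L v u}"

definition syntactic_monoid :: "'b list set \<Rightarrow> 'b list set monoid" where
  "syntactic_monoid L = \<lparr> carrier = range (synt_class L),
     mult = (\<lambda>X Y. {w. \<exists>x\<in>X. \<exists>y\<in>Y. synt_cong L w (x @ y)}),
     one = synt_class L [] \<rparr>"

definition in_ECom :: "('m, 'x) monoid_scheme \<Rightarrow> bool" where
  "in_ECom M \<longleftrightarrow> monoid M \<and> finite (carrier M) \<and>
     (\<forall>e\<in>carrier M. \<forall>f\<in>carrier M. e \<otimes>\<^bsub>M\<^esub> e = e \<and> f \<otimes>\<^bsub>M\<^esub> f = f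
        \<longrightarrow> e \<otimes>\<^bsub>M\<^esub> f = f \<otimes>\<^bsub>M\<^esub> e)"

end

theory Submission
  imports Defs
begin

definition ok :: "nat set \<Rightarrow> (nat \<Rightarrow> 'b \<Rightarrow> nat \<Rightarrow> 'a::zero) \<Rightarrow> nat \<Rightarrow> 'b \<Rightarrow> bool" where
  "ok Q \<sigma> p a \<longleftrightarrow> p \<in> Q \<and> (\<exists>q\<in>Q. \<sigma> p a q \<noteq> 0)"

definition nxt :: "nat set \<Rightarrow> (nat \<Rightarrow> 'b \<Rightarrow> nat \<Rightarrow> 'a::zero) \<Rightarrow> nat \<Rightarrow> 'b \<Rightarrow> nat" where
  "nxt Q \<sigma> p a = (SOME q. q \<in> Q \<and> \<sigma> p a q \<noteq> 0)"

fun Phi :: "nat set \<Rightarrow> (nat \<Rightarrow> 'b \<Rightarrow> nat \<Rightarrow> 'a::comm_semiring_1) \<Rightarrow> 'b list \<Rightarrow> nat \<Rightarrow> (nat \<times> 'a) option" where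
  "Phi Q \<sigma> [] p = (if p \<in> Q then Some (p, 1) else None)"
| "Phi Q \<sigma> (a # w) p = (if ok Q \<sigma> p a then
     (case Phi Q \<sigma> w (nxt Q \<sigma> p a) of None \<Rightarrow> None
       | Some (r, d) \<Rightarrow> Some (r, \<sigma> p a (nxt Q \<sigma> p a) * d)) else None)"

fun run_of :: "nat set \<Rightarrow> (nat \<Rightarrow> 'b \<Rightarrow> nat \<Rightarrow> 'a::zero) \<Rightarrow> 'b list \<Rightarrow> nat \<Rightarrow> nat list option" where
  "run_of Q \<sigma> [] p = (if p \<in> Q then Some [p] else None)"
| "run_of Q \<sigma> (a # w) p = (if ok Q \<sigma> p a then map_option (Cons p) (run_of Q \<sigma> w (nxt Q \<sigma> p a)) else None)"

definition comp :: "(nat \<Rightarrow> (nat \<times> 'a::times) option) \<Rightarrow> (nat \<Rightarrow> (nat \<times> 'a) option) \<Rightarrow> nat \<Rightarrow> (nat \<times> 'a) option" where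
  "comp f g p = (case f p of None \<Rightarrow> None | Some (q, c) \<Rightarrow>
     (case g q of None \<Rightarrow> None | Some (r, d) \<Rightarrow> Some (r, c * d)))"

lemma nxt_props:
  assumes "ok Q \<sigma> p a" shows "nxt Q \<sigma> p a \<in> Q" "\<sigma> p a (nxt Q \<sigma> p a) \<noteq> 0"
proof -
  have "\<exists>q. q \<in> Q \<and> \<sigma> p a q \<noteq> 0" using assms unfolding ok_def by blast
  from someI_ex[OF this] show "nxt Q \<sigma> p a \<in> Q" "\<sigma> p a (nxt Q \<sigma> p a) \<noteq> 0"
    unfolding nxt_def by auto
qed

lemma nxt_unique:
  assumes "reversible Q \<sigma>" "p \<in> Q" "q \<in> Q" "\<sigma> p a q \<noteq> 0"
  shows "nxt Q \<sigma> p a = q"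
proof -
  have o: "ok Q \<sigma> p a" using assms unfolding ok_def by blast
  show ?thesis using nxt_props[OF o] assms unfolding reversible_def by blast
qed

lemma is_run_Nil_states: "\<not> is_run Q \<sigma> w []"
  unfolding is_run_def by simp

lemma is_run_Cons:
  "is_run Q \<sigma> (a # w) (p # qs) \<longleftrightarrow> p \<in> Q \<and> qs \<noteq> [] \<and> \<sigma> p a (hd qs) \<noteq> 0 \<and> is_run Q \<sigma> w qs"
proof
  assume h: "is_run Q \<sigma> (a # w) (p # qs)"
  then have l: "length qs = Suc (length w)" unfolding is_run_def by simp
  then have ne: "qs \<noteq> []" by auto
  have "\<sigma> ((p#qs) ! 0) ((a#w) ! 0) ((p#qs) ! Suc 0) \<noteq> 0" using h unfolding is_run_def by blast
  then have s: "\<sigma> p a (hd qs) \<noteq> 0" using ne by (simp add: hd_conv_nth)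
  have "\<forall>k<length w. \<sigma> (qs ! k) (w ! k) (qs ! Suc k) \<noteq> 0"
  proof (intro allI impI)
    fix k assume "k < length w"
    then have "\<sigma> ((p#qs) ! Suc k) ((a#w) ! Suc k) ((p#qs) ! Suc (Suc k)) \<noteq> 0"
      using h unfolding is_run_def by (metis Suc_less_eq length_Cons)
    then show "\<sigma> (qs ! k) (w ! k) (qs ! Suc k) \<noteq> 0" by simp
  qed
  then show "p \<in> Q \<and> qs \<noteq> [] \<and> \<sigma> p a (hd qs) \<noteq> 0 \<and> is_run Q \<sigma> w qs"
    using h l ne s unfolding is_run_def by auto
next
  assume h: "p \<in> Q \<and> qs \<noteq> [] \<and> \<sigma> p a (hd qs) \<noteq> 0 \<and> is_run Q \<sigma> w qs"
  have "\<forall>k<length (a#w). \<sigma> ((p#qs) ! k) ((a#w) ! k) ((p#qs) ! Suc k) \<noteq> 0"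
  proof (intro allI impI)
    fix k assume k: "k < length (a#w)"
    show "\<sigma> ((p#qs) ! k) ((a#w) ! k) ((p#qs) ! Suc k) \<noteq> 0"
    proof (cases k)
      case 0 then show ?thesis using h by (simp add: hd_conv_nth[symmetric])
    next
      case (Suc j) then show ?thesis using h k unfolding is_run_def by simp
    qed
  qed
  then show "is_run Q \<sigma> (a # w) (p # qs)" using h unfolding is_run_def by auto
qed

lemma is_run_Nil_word: "is_run Q \<sigma> [] qs \<longleftrightarrow> (\<exists>p\<in>Q. qs = [p])"
  unfolding is_run_def by (auto simp: length_Suc_conv)

lemma runs_from:
  assumes rev: "reversible Q \<sigma>"
  shows "is_run Q \<sigma> w qs \<and> hd qs = p \<longleftrightarrow> run_of Q \<sigma> w p = Some qs"
proof (induction w arbitrary: p qs)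
  case Nil
  then show ?case by (auto simp: is_run_Nil_word)
next
  case (Cons a w)
  note IH = Cons.IH
  show ?case
  proof (cases qs)
    case Nil
    then show ?thesis by (auto simp: is_run_Nil_states)
  next
    case (Cons p' qs')
    show ?thesis
    proof
      assume h: "is_run Q \<sigma> (a # w) qs \<and> hd qs = p"
      have h2: "p \<in> Q" "qs' \<noteq> []" "\<sigma> p a (hd qs') \<noteq> 0" "is_run Q \<sigma> w qs'" "p' = p"
      proof -
        have "p' = p" using h Cons by simp
        then have "is_run Q \<sigma> (a # w) (p # qs')" using h Cons by simp
        then show "p \<in> Q" "qs' \<noteq> []" "\<sigma> p a (hd qs') \<noteq> 0" "is_run Q \<sigma> w qs'" "p' = p"
          unfolding is_run_Cons using \<open>p' = p\<close> by auto
      qed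
      have hq: "hd qs' \<in> Q" using h2(2,4) unfolding is_run_def by (meson hd_in_set subsetD)
      have o: "ok Q \<sigma> p a" using h2 hq unfolding ok_def by blast
      have n: "nxt Q \<sigma> p a = hd qs'" using nxt_unique[OF rev h2(1) hq h2(3)] .
      have "run_of Q \<sigma> w (nxt Q \<sigma> p a) = Some qs'" using IH[of qs' "nxt Q \<sigma> p a"] h2 n by simp
      then show "run_of Q \<sigma> (a # w) p = Some qs" using o Cons h2 by simp
    next
      assume h: "run_of Q \<sigma> (a # w) p = Some qs"
      then have o: "ok Q \<sigma> p a" by (simp split: if_splits)
      then have r: "run_of Q \<sigma> w (nxt Q \<sigma> p a) = Some qs'" "p' = p" using h Cons by auto
      then have "is_run Q \<sigma> w qs'" "hd qs' = nxt Q \<sigma> p a" using IH[of qs' "nxt Q \<sigma> p a"] by simp_all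
      moreover have "qs' \<noteq> []" using \<open>is_run Q \<sigma> w qs'\<close> is_run_Nil_states by metis
      ultimately have "is_run Q \<sigma> (a # w) (p # qs')"
        unfolding is_run_Cons using nxt_props[OF o] o unfolding ok_def by simp
      then show "is_run Q \<sigma> (a # w) qs \<and> hd qs = p" using Cons r by simp
    qed
  qed
qed


lemma run_Phi:
  "run_of Q \<sigma> w p = Some qs \<Longrightarrow> Phi Q \<sigma> w p =
     Some (qs ! length w, \<Prod>k<length w. \<sigma> (qs ! k) (w ! k) (qs ! Suc k))
     \<and> length qs = Suc (length w) \<and> qs ! 0 = p"
proof (induction w arbitrary: p qs)
  case Nil
  then show ?case by (auto split: if_splits)
next
  case (Cons a w)
  from Cons.prems have o: "ok Q \<sigma> p a" by (simp split: if_splits)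
  with Cons.prems obtain qs' where r: "run_of Q \<sigma> w (nxt Q \<sigma> p a) = Some qs'" "qs = p # qs'" by auto
  note ih = Cons.IH[OF r(1)]
  show ?case using o r ih
    by (simp add: prod.lessThan_Suc_shift del: prod.lessThan_Suc)
qed

lemma run_Phi_None: "run_of Q \<sigma> w p = None \<Longrightarrow> Phi Q \<sigma> w p = None"
  by (induction w arbitrary: p) (auto split: option.splits)

lemma Phi_notQ: "p \<notin> Q \<Longrightarrow> Phi Q \<sigma> w p = None"
  by (cases w) (auto simp: ok_def)

lemma Phi_append: "Phi Q \<sigma> (x @ w) p = comp (Phi Q \<sigma> x) (Phi Q \<sigma> w) p"
proof (induction x arbitrary: p)
  case Nil
  then show ?case by (auto simp: comp_def Phi_notQ split: option.splits)
next
  case (Cons a x)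
  then show ?case by (auto simp: comp_def mult.assoc split: option.splits)
qed

lemma Phi_inQ: "Phi Q \<sigma> w p = Some (q, c) \<Longrightarrow> p \<in> Q \<and> q \<in> Q"
proof (induction w arbitrary: p c)
  case Nil
  then show ?case by (simp split: if_splits)
next
  case (Cons a w)
  then show ?case by (auto simp: ok_def split: if_splits option.splits)
qed

lemma Phi_inj:
  assumes rev: "reversible Q \<sigma>"
  shows "Phi Q \<sigma> w p = Some (q, c) \<Longrightarrow> Phi Q \<sigma> w p' = Some (q, c') \<Longrightarrow> p = p'"
proof (induction w arbitrary: p p' c c')
  case Nil
  then show ?case by (simp split: if_splits)
next
  case (Cons a w)
  from Cons.prems have o: "ok Q \<sigma> p a" "ok Q \<sigma> p' a" by (auto split: if_splits)
  from Cons.prems o obtain d d' where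
    "Phi Q \<sigma> w (nxt Q \<sigma> p a) = Some (q, d)" "Phi Q \<sigma> w (nxt Q \<sigma> p' a) = Some (q, d')"
    by (auto split: option.splits)
  then have e: "nxt Q \<sigma> p a = nxt Q \<sigma> p' a" using Cons.IH by blast
  show ?case using nxt_props[OF o(1)] nxt_props[OF o(2)] o e rev
    unfolding reversible_def ok_def by metis
qed

lemma behaviour_eq:
  assumes fin: "finite Q" and rev: "reversible Q \<sigma>"
  shows "behaviour Q \<sigma> \<iota> \<tau> w =
    (\<Sum>p\<in>Q. case Phi Q \<sigma> w p of None \<Rightarrow> 0 | Some (q, c) \<Rightarrow> \<iota> p * c * \<tau> q)"
proof -
  have runs: "{qs. is_run Q \<sigma> w qs} = (\<Union>p\<in>Q. set_option (run_of Q \<sigma> w p))"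
  proof (rule Set.set_eqI, rule iffI)
    fix qs assume "qs \<in> {qs. is_run Q \<sigma> w qs}"
    then have h: "is_run Q \<sigma> w qs" by simp
    then have "qs \<noteq> []" using is_run_Nil_states by metis
    then have "hd qs \<in> Q" using h unfolding is_run_def by auto
    moreover have "run_of Q \<sigma> w (hd qs) = Some qs" using runs_from[OF rev] h by blast
    ultimately show "qs \<in> (\<Union>p\<in>Q. set_option (run_of Q \<sigma> w p))" by force
  next
    fix qs assume "qs \<in> (\<Union>p\<in>Q. set_option (run_of Q \<sigma> w p))"
    then obtain p where "run_of Q \<sigma> w p = Some qs" by auto
    then show "qs \<in> {qs. is_run Q \<sigma> w qs}" using runs_from[OF rev] by blast
  qed
  have "behaviour Q \<sigma> \<iota> \<tau> w = (\<Sum>qs\<in>(\<Union>p\<in>Q. set_option (run_of Q \<sigma> w p)). run_weight \<sigma> \<iota> \<tau> w qs)"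
    unfolding behaviour_def runs ..
  also have "\<dots> = (\<Sum>p\<in>Q. \<Sum>qs\<in>set_option (run_of Q \<sigma> w p). run_weight \<sigma> \<iota> \<tau> w qs)"
  proof (rule sum.UNION_disjoint[OF fin])
    show "\<forall>i\<in>Q. finite (set_option (run_of Q \<sigma> w i))" by simp
    show "\<forall>i\<in>Q. \<forall>j\<in>Q. i \<noteq> j \<longrightarrow> set_option (run_of Q \<sigma> w i) \<inter> set_option (run_of Q \<sigma> w j) = {}"
    proof (intro ballI impI)
      fix i j assume "i \<in> Q" "j \<in> Q" "i \<noteq> j"
      show "set_option (run_of Q \<sigma> w i) \<inter> set_option (run_of Q \<sigma> w j) = {}"
      proof (rule ccontr)
        assume "set_option (run_of Q \<sigma> w i) \<inter> set_option (run_of Q \<sigma> w j) \<noteq> {}"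
        then obtain qs where "run_of Q \<sigma> w i = Some qs" "run_of Q \<sigma> w j = Some qs" by auto
        then have "hd qs = i" "hd qs = j" using runs_from[OF rev, of w qs] by blast+
        then show False using \<open>i \<noteq> j\<close> by simp
      qed
    qed
  qed
  also have "\<dots> = (\<Sum>p\<in>Q. case Phi Q \<sigma> w p of None \<Rightarrow> 0 | Some (q, c) \<Rightarrow> \<iota> p * c * \<tau> q)"
  proof (rule sum.cong[OF refl])
    fix p assume "p \<in> Q"
    show "(\<Sum>qs\<in>set_option (run_of Q \<sigma> w p). run_weight \<sigma> \<iota> \<tau> w qs) =
      (case Phi Q \<sigma> w p of None \<Rightarrow> 0 | Some (q, c) \<Rightarrow> \<iota> p * c * \<tau> q)"
    proof (cases "run_of Q \<sigma> w p")
      case None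
      then show ?thesis using run_Phi_None[OF None] by simp
    next
      case (Some qs)
      from run_Phi[OF Some] show ?thesis using Some by (simp add: run_weight_def)
    qed
  qed
  finally show ?thesis .
qed


lemma Phi_append_fun: "Phi Q \<sigma> (x @ w) = comp (Phi Q \<sigma> x) (Phi Q \<sigma> w)"
  using Phi_append by blast

lemma Phi_cong_left: "Phi Q \<sigma> x = Phi Q \<sigma> x' \<Longrightarrow> Phi Q \<sigma> (x @ w) = Phi Q \<sigma> (x' @ w)"
  by (simp add: Phi_append_fun)

lemma Phi_cong_right: "Phi Q \<sigma> w = Phi Q \<sigma> w' \<Longrightarrow> Phi Q \<sigma> (x @ w) = Phi Q \<sigma> (x @ w')"
  by (simp add: Phi_append_fun)

lemma Phi_synt_cong:
  assumes fin: "finite Q" and rev: "reversible Q \<sigma>"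
    and e: "Phi Q \<sigma> u = Phi Q \<sigma> v"
  shows "synt_cong {w. behaviour Q \<sigma> \<iota> \<tau> w \<noteq> 0} u v"
  unfolding synt_cong_def
proof (intro allI)
  fix x y
  have "Phi Q \<sigma> (x @ u @ y) = Phi Q \<sigma> (x @ v @ y)"
    by (rule Phi_cong_right, rule Phi_cong_left, rule e)
  then have "behaviour Q \<sigma> \<iota> \<tau> (x @ u @ y) = behaviour Q \<sigma> \<iota> \<tau> (x @ v @ y)"
    by (simp add: behaviour_eq[OF fin rev])
  then show "x @ u @ y \<in> {w. behaviour Q \<sigma> \<iota> \<tau> w \<noteq> 0} \<longleftrightarrow> x @ v @ y \<in> {w. behaviour Q \<sigma> \<iota> \<tau> w \<noteq> 0}"
    by simp
qed

lemma Phi_range: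
  "Phi Q \<sigma> w p \<in> (if p \<in> Q then insert None (Some ` (Q \<times> gen_subsemiring ((\<lambda>(p, a, q). \<sigma> p a q) ` (Q \<times> UNIV \<times> Q)))) else {None})"
proof (induction w arbitrary: p)
  case Nil
  then show ?case by (auto intro: gen_subsemiring.gen_one)
next
  case (Cons a w)
  show ?case
  proof (cases "ok Q \<sigma> p a")
    case False
    then show ?thesis by auto
  next
    case True
    note np = nxt_props[OF True]
    show ?thesis
    proof (cases "Phi Q \<sigma> w (nxt Q \<sigma> p a)")
      case None
      then show ?thesis using True by (auto simp: ok_def)
    next
      case (Some rd)
      then obtain r d where rd: "Phi Q \<sigma> w (nxt Q \<sigma> p a) = Some (r, d)" by (cases rd) auto
      have "Some (r, d) \<in> Some ` (Q \<times> gen_subsemiring ((\<lambda>(p, a, q). \<sigma> p a q) ` (Q \<times> UNIV \<times> Q)))"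
        using Cons.IH[of "nxt Q \<sigma> p a"] rd np by auto
      then have r: "r \<in> Q" and d: "d \<in> gen_subsemiring ((\<lambda>(p, a, q). \<sigma> p a q) ` (Q \<times> UNIV \<times> Q))" by auto
      have s: "\<sigma> p a (nxt Q \<sigma> p a) \<in> gen_subsemiring ((\<lambda>(p, a, q). \<sigma> p a q) ` (Q \<times> UNIV \<times> Q))"
      proof (rule gen_subsemiring.gen_base)
        show "\<sigma> p a (nxt Q \<sigma> p a) \<in> (\<lambda>(p, a, q). \<sigma> p a q) ` (Q \<times> UNIV \<times> Q)"
          using True np unfolding ok_def by (intro image_eqI[where x="(p, a, nxt Q \<sigma> p a)"]) auto
      qed
      show ?thesis using True rd r gen_subsemiring.gen_mult[OF s d] by (auto simp: ok_def)
    qed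
  qed
qed

lemma Phi_finite:
  fixes \<sigma> :: "nat \<Rightarrow> 'b::finite \<Rightarrow> nat \<Rightarrow> 'a::comm_ring_1"
  assumes lf: "locally_finite TYPE('a)" and fin: "finite Q"
  shows "finite (range (Phi Q \<sigma>))"
proof -
  define G where "G = gen_subsemiring ((\<lambda>(p, a, q). \<sigma> p a q) ` (Q \<times> UNIV \<times> Q))"
  have "finite ((\<lambda>(p, a, q). \<sigma> p a q) ` (Q \<times> (UNIV::'b set) \<times> Q))" using fin by simp
  then have fG: "finite G" using lf unfolding locally_finite_def G_def by blast
  define B where "B = insert None (Some ` (Q \<times> G))"
  have fB: "finite B" unfolding B_def using fin fG by simp
  have "range (Phi Q \<sigma>) \<subseteq> {f. \<forall>x. (x \<in> Q \<longrightarrow> f x \<in> B) \<and> (x \<notin> Q \<longrightarrow> f x = None)}"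
  proof (intro subsetI CollectI allI conjI impI)
    fix f x assume "f \<in> range (Phi Q \<sigma>)"
    then obtain w where f: "f = Phi Q \<sigma> w" by auto
    have h: "Phi Q \<sigma> w x \<in> (if x \<in> Q then B else {None})"
      using Phi_range[of Q \<sigma> w x] unfolding B_def G_def .
    show "x \<in> Q \<Longrightarrow> f x \<in> B" using h f by simp
    show "x \<notin> Q \<Longrightarrow> f x = None" using h f by simp
  qed
  then show ?thesis using finite_set_of_finite_funs[OF fin fB] finite_subset by blast
qed


definition pw :: "'b list \<Rightarrow> nat \<Rightarrow> 'b list" where
  "pw u n = concat (replicate n u)"

lemma pw_add: "pw u (m + n) = pw u m @ pw u n"
  unfolding pw_def by (simp add: replicate_add)

lemma pw_Suc: "pw u (Suc n) = u @ pw u n"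
  unfolding pw_def by simp

lemma Phi_idem_power:
  assumes fr: "finite (range (Phi Q \<sigma>))"
  shows "\<exists>m\<ge>1. Phi Q \<sigma> (pw u m @ pw u m) = Phi Q \<sigma> (pw u m)"
proof -
  define P where "P n = Phi Q \<sigma> (pw u n)" for n
  have "range P \<subseteq> range (Phi Q \<sigma>)" unfolding P_def by auto
  then have "finite (range P)" using fr finite_subset by blast
  then have "\<not> inj P" using finite_imageD[of P UNIV] by auto
  then obtain a b where ab: "P a = P b" "a \<noteq> b" unfolding inj_def by blast
  have "\<exists>a b. a < b \<and> P a = P b"
  proof (cases "a < b")
    case True then show ?thesis using ab by blast
  next
    case False then have "b < a" using ab by simp
    then show ?thesis using ab by metis
  qed
  then obtain a b where ab: "a < b" "P a = P b" by blast
  define i where "i = Suc a"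
  define p where "p = b - a"
  have p1: "p \<ge> 1" using ab unfolding p_def by simp
  have i1: "i \<ge> 1" unfolding i_def by simp
  have base: "P (i + p) = P i"
  proof -
    have "P (i + p) = Phi Q \<sigma> (pw u b @ pw u 1)" unfolding P_def i_def p_def using ab(1)
      by (metis Suc_eq_plus1 add.commute le_add_diff_inverse less_imp_le add_Suc pw_add)
    also have "\<dots> = Phi Q \<sigma> (pw u a @ pw u 1)" using ab(2) unfolding P_def
      by (intro Phi_cong_left) simp
    also have "\<dots> = P i" unfolding P_def i_def by (simp add: pw_add[symmetric])
    finally show ?thesis .
  qed
  have shift: "P (i + p + t) = P (i + t)" for t
  proof -
    have "P (i + p + t) = Phi Q \<sigma> (pw u (i + p) @ pw u t)" unfolding P_def by (simp add: pw_add)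
    also have "\<dots> = Phi Q \<sigma> (pw u i @ pw u t)" using base unfolding P_def by (intro Phi_cong_left)
    also have "\<dots> = P (i + t)" unfolding P_def by (simp add: pw_add)
    finally show ?thesis .
  qed
  have multi: "P (i + t + k * p) = P (i + t)" for t k
  proof (induction k)
    case 0 then show ?case by simp
  next
    case (Suc k)
    have "P (i + t + Suc k * p) = P (i + p + (t + k * p))" by (simp add: algebra_simps)
    also have "\<dots> = P (i + (t + k * p))" by (rule shift)
    also have "\<dots> = P (i + t)" using Suc by (simp add: add.assoc)
    finally show ?case .
  qed
  define m where "m = i * p"
  have mi: "m \<ge> i" unfolding m_def using p1 by simp
  have m1: "m \<ge> 1" using mi i1 by simp
  have "P (m + m) = P m"
    using multi[of "m - i" i] mi unfolding m_def by (simp add: mult.commute)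
  then show ?thesis using m1 unfolding P_def by (metis pw_add)
qed

lemma idem_fix:
  assumes rev: "reversible Q \<sigma>" and idem: "Phi Q \<sigma> (U @ U) = Phi Q \<sigma> U"
    and h: "Phi Q \<sigma> U p = Some (q, c)"
  shows "q = p"
proof -
  have "comp (Phi Q \<sigma> U) (Phi Q \<sigma> U) p = Some (q, c)" using idem h by (simp add: Phi_append_fun)
  then obtain d where "Phi Q \<sigma> U q = Some (q, d)" using h
    by (auto simp: comp_def split: option.splits)
  then show ?thesis using Phi_inj[OF rev] h by metis
qed

lemma idem_comm:
  assumes rev: "reversible Q \<sigma>" and iU: "Phi Q \<sigma> (U @ U) = Phi Q \<sigma> U"
    and iV: "Phi Q \<sigma> (V @ V) = Phi Q \<sigma> V"
  shows "Phi Q \<sigma> (U @ V) = Phi Q \<sigma> (V @ U)"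
proof
  fix p
  have fU: "\<And>q c. Phi Q \<sigma> U p = Some (q, c) \<Longrightarrow> q = p" using idem_fix[OF rev iU] by blast
  have fV: "\<And>q c. Phi Q \<sigma> V p = Some (q, c) \<Longrightarrow> q = p" using idem_fix[OF rev iV] by blast
  show "Phi Q \<sigma> (U @ V) p = Phi Q \<sigma> (V @ U) p"
  proof (cases "Phi Q \<sigma> U p")
    case None
    then show ?thesis using fV by (auto simp: Phi_append_fun comp_def split: option.splits)
  next
    case (Some qc)
    then obtain c where c: "Phi Q \<sigma> U p = Some (p, c)" using fU by (cases qc) auto
    show ?thesis
    proof (cases "Phi Q \<sigma> V p")
      case None
      then show ?thesis using c by (auto simp: Phi_append_fun comp_def split: option.splits)
    next
      case (Some qd)
      then obtain d where d: "Phi Q \<sigma> V p = Some (p, d)" using fV by (cases qd) auto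
      show ?thesis using c d by (simp add: Phi_append_fun comp_def mult.commute)
    qed
  qed
qed

lemma synt_cong_refl: "synt_cong L u u"
  unfolding synt_cong_def by simp

lemma synt_cong_sym: "synt_cong L u v \<Longrightarrow> synt_cong L v u"
  unfolding synt_cong_def by simp

lemma synt_cong_trans: "synt_cong L u v \<Longrightarrow> synt_cong L v w \<Longrightarrow> synt_cong L u w"
  unfolding synt_cong_def by simp

lemma synt_cong_app: "synt_cong L u u' \<Longrightarrow> synt_cong L v v' \<Longrightarrow> synt_cong L (u @ v) (u' @ v')"
  unfolding synt_cong_def
proof (intro allI)
  fix x y
  assume h1: "\<forall>x y. x @ u @ y \<in> L \<longleftrightarrow> x @ u' @ y \<in> L" and h2: "\<forall>x y. x @ v @ y \<in> L \<longleftrightarrow> x @ v' @ y \<in> L"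
  have "x @ (u @ v) @ y \<in> L \<longleftrightarrow> x @ u @ (v @ y) \<in> L" by simp
  also have "\<dots> \<longleftrightarrow> x @ u' @ (v @ y) \<in> L" using h1 by blast
  also have "\<dots> \<longleftrightarrow> (x @ u') @ v @ y \<in> L" by simp
  also have "\<dots> \<longleftrightarrow> (x @ u') @ v' @ y \<in> L" using h2 by blast
  also have "\<dots> \<longleftrightarrow> x @ (u' @ v') @ y \<in> L" by simp
  finally show "x @ (u @ v) @ y \<in> L \<longleftrightarrow> x @ (u' @ v') @ y \<in> L" .
qed

lemma class_eq: "synt_class L u = synt_class L v \<longleftrightarrow> synt_cong L u v"
proof
  assume "synt_class L u = synt_class L v"
  moreover have "u \<in> synt_class L u" unfolding synt_class_def by (simp add: synt_cong_refl)
  ultimately show "synt_cong L u v" unfolding synt_class_def by simp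
next
  assume h: "synt_cong L u v"
  show "synt_class L u = synt_class L v" unfolding synt_class_def
    using h synt_cong_trans synt_cong_sym by blast
qed

lemma mult_class:
  "mult (syntactic_monoid L) (synt_class L u) (synt_class L v) = synt_class L (u @ v)"
proof (rule Set.set_eqI, rule iffI)
  fix w assume "w \<in> mult (syntactic_monoid L) (synt_class L u) (synt_class L v)"
  then obtain x y where "synt_cong L x u" "synt_cong L y v" "synt_cong L w (x @ y)"
    unfolding syntactic_monoid_def synt_class_def by auto
  then show "w \<in> synt_class L (u @ v)" unfolding synt_class_def
    using synt_cong_app synt_cong_trans by blast
next
  fix w assume "w \<in> synt_class L (u @ v)"
  then show "w \<in> mult (syntactic_monoid L) (synt_class L u) (synt_class L v)"
    unfolding syntactic_monoid_def synt_class_def using synt_cong_refl by auto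
qed

lemma synt_monoid: "monoid (syntactic_monoid L)"
proof (rule monoidI)
  fix x y assume "x \<in> carrier (syntactic_monoid L)" "y \<in> carrier (syntactic_monoid L)"
  then obtain u v where "x = synt_class L u" "y = synt_class L v" unfolding syntactic_monoid_def by auto
  then show "x \<otimes>\<^bsub>syntactic_monoid L\<^esub> y \<in> carrier (syntactic_monoid L)"
    using mult_class[of L u v] unfolding syntactic_monoid_def by simp
next
  show "\<one>\<^bsub>syntactic_monoid L\<^esub> \<in> carrier (syntactic_monoid L)" unfolding syntactic_monoid_def by simp
next
  fix x y z assume "x \<in> carrier (syntactic_monoid L)" "y \<in> carrier (syntactic_monoid L)" "z \<in> carrier (syntactic_monoid L)"
  then obtain u v w where "x = synt_class L u" "y = synt_class L v" "z = synt_class L w"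
    unfolding syntactic_monoid_def by auto
  then show "x \<otimes>\<^bsub>syntactic_monoid L\<^esub> y \<otimes>\<^bsub>syntactic_monoid L\<^esub> z =
      x \<otimes>\<^bsub>syntactic_monoid L\<^esub> (y \<otimes>\<^bsub>syntactic_monoid L\<^esub> z)"
    by (simp add: mult_class)
next
  fix x assume "x \<in> carrier (syntactic_monoid L)"
  then obtain u where u: "x = synt_class L u" unfolding syntactic_monoid_def by auto
  have o: "\<one>\<^bsub>syntactic_monoid L\<^esub> = synt_class L []" unfolding syntactic_monoid_def by simp
  show "\<one>\<^bsub>syntactic_monoid L\<^esub> \<otimes>\<^bsub>syntactic_monoid L\<^esub> x = x"
    using u o mult_class[of L "[]" u] by simp
  show "x \<otimes>\<^bsub>syntactic_monoid L\<^esub> \<one>\<^bsub>syntactic_monoid L\<^esub> = x"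
    using u o mult_class[of L u "[]"] by simp
qed

lemma class_pw:
  assumes "synt_class L (u @ u) = synt_class L u"
  shows "synt_class L (pw u (Suc n)) = synt_class L u"
proof (induction n)
  case 0 then show ?case by (simp add: pw_def)
next
  case (Suc n)
  have "synt_class L (pw u (Suc (Suc n))) = mult (syntactic_monoid L) (synt_class L u) (synt_class L (pw u (Suc n)))"
    by (simp only: pw_Suc[of u "Suc n"] mult_class)
  also have "\<dots> = synt_class L (u @ u)" using Suc by (simp add: mult_class)
  finally show ?case using assms by simp
qed

theorem lemma3:
  fixes L :: "('b::finite) list set"
  assumes "locally_finite TYPE('a::comm_ring_1)"
    and "L \<in> RevL TYPE('a)"
  shows "in_ECom (syntactic_monoid L)"
proof -
  obtain Q and \<sigma> :: "nat \<Rightarrow> 'b \<Rightarrow> nat \<Rightarrow> 'a" and \<iota> \<tau> where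
    L: "L = {w. behaviour Q \<sigma> \<iota> \<tau> w \<noteq> 0}" and fin: "finite Q" and rev: "reversible Q \<sigma>"
    using assms(2) unfolding RevL_def by blast
  have fr: "finite (range (Phi Q \<sigma>))" using Phi_finite[OF assms(1) fin] .
  have cong: "synt_cong L u v" if "Phi Q \<sigma> u = Phi Q \<sigma> v" for u v
    unfolding L using Phi_synt_cong[OF fin rev that] .
  define h where "h f = synt_class L (SOME w. Phi Q \<sigma> w = f)" for f
  have "range (synt_class L) \<subseteq> h ` range (Phi Q \<sigma>)"
  proof
    fix X assume "X \<in> range (synt_class L)"
    then obtain u where u: "X = synt_class L u" by auto
    have "Phi Q \<sigma> (SOME w. Phi Q \<sigma> w = Phi Q \<sigma> u) = Phi Q \<sigma> u" by (rule someI) (rule refl)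
    then have "h (Phi Q \<sigma> u) = X" unfolding h_def u using cong class_eq by metis
    then show "X \<in> h ` range (Phi Q \<sigma>)" by blast
  qed
  moreover have "finite (h ` range (Phi Q \<sigma>))" by (rule finite_imageI[OF fr])
  ultimately have "finite (range (synt_class L))" by (rule finite_subset)
  then have finC: "finite (carrier (syntactic_monoid L))"
    by (simp add: syntactic_monoid_def)
  have comm: "e \<otimes>\<^bsub>syntactic_monoid L\<^esub> f = f \<otimes>\<^bsub>syntactic_monoid L\<^esub> e"
    if e: "e \<in> carrier (syntactic_monoid L)" and f: "f \<in> carrier (syntactic_monoid L)"
      and ee: "e \<otimes>\<^bsub>syntactic_monoid L\<^esub> e = e" and ff: "f \<otimes>\<^bsub>syntactic_monoid L\<^esub> f = f" for e f
  proof -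
    obtain u v where u: "e = synt_class L u" and v: "f = synt_class L v"
      using e f unfolding syntactic_monoid_def by auto
    have uu: "synt_class L (u @ u) = synt_class L u" using ee u mult_class by metis
    have vv: "synt_class L (v @ v) = synt_class L v" using ff v mult_class by metis
    obtain m where m: "m \<ge> 1" "Phi Q \<sigma> (pw u m @ pw u m) = Phi Q \<sigma> (pw u m)"
      using Phi_idem_power[OF fr] by blast
    obtain n where n: "n \<ge> 1" "Phi Q \<sigma> (pw v n @ pw v n) = Phi Q \<sigma> (pw v n)"
      using Phi_idem_power[OF fr] by blast
    have cu: "synt_class L (pw u m) = synt_class L u"
      using class_pw[OF uu, of "m - 1"] m(1) by simp
    have cv: "synt_class L (pw v n) = synt_class L v"
      using class_pw[OF vv, of "n - 1"] n(1) by simp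
    have "Phi Q \<sigma> (pw u m @ pw v n) = Phi Q \<sigma> (pw v n @ pw u m)"
      using idem_comm[OF rev m(2) n(2)] .
    then have "synt_class L (pw u m @ pw v n) = synt_class L (pw v n @ pw u m)"
      using cong class_eq by metis
    then have "mult (syntactic_monoid L) (synt_class L (pw u m)) (synt_class L (pw v n)) =
               mult (syntactic_monoid L) (synt_class L (pw v n)) (synt_class L (pw u m))"
      by (simp add: mult_class)
    then show ?thesis using cu cv u v by simp
  qed
  show ?thesis unfolding in_ECom_def using synt_monoid finC comm by blast
qed

end
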